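(* Let $(\Omega,\mathcal F,\mu)$ be a measure space and $p\in[1,\infty]$. Then for every $k\geq 1$ the set $\mathscr G_{p,k}$ is proximinal in $L^p(\Omega,\mathcal F,\mu)$; that is, for every $f\in L^p(\Omega,\mathcal F,\mu)$ there exists $g\in\mathscr G_{p,k}$ with $\|f-g\|_p=\mathscr D_{p,k}(f)$.
   Context: All measures are assumed not identically zero. For $p\in[1,\infty]$ and $k\ge 1$, $\mathscr G_{p,k}$ denotes the set of functions of the form $\sum_{i=1}^l a_i\mathbf 1_{A_i}$ that belong to $L^p(\Omega,\mathcal F,\mu)$, where $l\le k$, $\{A_i\}_{1\le i\le l}$ is a measurable partition of $\Omega$ and $a_i\in\mathbb R$ (for $p<\infty$ this forces $a_i=0$ whenever $\mu(A_i)=\infty$). For $f\in L^p$, $\mathscr D_{p,k}(f)=\inf\{\|f-h\|_p:\ h\in\mathscr G_{p,k}\}$. A subset $K$ of a Banach space $X$ is proximinal if for every $x\in X$ the set $P_K(x)=\{y\in K:\ \|x-y\|=d(x,K)\}$ is nonempty. *)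

theory Defs
  imports "HOL-Probability.Essential_Supremum"
begin

text \<open>Exponent p ranges over [1,\<infinity>] as an ennreal.
  Membership in L^p (as a set of functions; the statement is insensitive to a.e. identification).\<close>
definition memLp :: "'a measure \<Rightarrow> ennreal \<Rightarrow> ('a \<Rightarrow> real) \<Rightarrow> bool" where
  "memLp M p f \<longleftrightarrow> f \<in> borel_measurable M \<and>
     (if p = \<infinity> then esssup M (\<lambda>x. ereal \<bar>f x\<bar>) < \<infinity>
      else integrable M (\<lambda>x. \<bar>f x\<bar> powr enn2real p))"

definition Lp_norm :: "'a measure \<Rightarrow> ennreal \<Rightarrow> ('a \<Rightarrow> real) \<Rightarrow> real" where
  "Lp_norm M p f =
     (if p = \<infinity> then real_of_ereal (esssup M (\<lambda>x. ereal \<bar>f x\<bar>))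
      else (\<integral>x. \<bar>f x\<bar> powr enn2real p \<partial>M) powr (1 / enn2real p))"

definition G_set :: "'a measure \<Rightarrow> ennreal \<Rightarrow> nat \<Rightarrow> ('a \<Rightarrow> real) set" where
  "G_set M p k = {h. memLp M p h \<and>
     (\<exists>l A a. l \<le> k \<and> (\<forall>i<l. A i \<in> sets M) \<and>
        (\<forall>i<l. \<forall>j<l. i \<noteq> j \<longrightarrow> A i \<inter> A j = {}) \<and>
        (\<Union>i<l. A i) = space M \<and>
        (\<forall>x\<in>space M. h x = (\<Sum>i<l. a i * indicator (A i) x)))}"

definition D_dist :: "'a measure \<Rightarrow> ennreal \<Rightarrow> nat \<Rightarrow> ('a \<Rightarrow> real) \<Rightarrow> real" where
  "D_dist M p k f = Inf {Lp_norm M p (\<lambda>x. f x - h x) | h. h \<in> G_set M p k}"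

end

theory Submission
  imports Defs
begin


definition dd :: "('a \<Rightarrow> real) \<Rightarrow> nat \<Rightarrow> (nat \<Rightarrow> real) \<Rightarrow> 'a \<Rightarrow> real" where
  "dd f k c x = Min ((\<lambda>i. \<bar>f x - c i\<bar>) ` {..<k})"

definition AA :: "'a measure \<Rightarrow> ('a \<Rightarrow> real) \<Rightarrow> nat \<Rightarrow> (nat \<Rightarrow> real) \<Rightarrow> nat \<Rightarrow> 'a set" where
  "AA M f k c i = {x \<in> space M. (\<forall>j<k. \<bar>f x - c i\<bar> \<le> \<bar>f x - c j\<bar>) \<and> (\<forall>j<i. \<bar>f x - c i\<bar> < \<bar>f x - c j\<bar>)}"

definition gg :: "'a measure \<Rightarrow> ('a \<Rightarrow> real) \<Rightarrow> nat \<Rightarrow> (nat \<Rightarrow> real) \<Rightarrow> 'a \<Rightarrow> real" where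
  "gg M f k c x = (\<Sum>i<k. c i * indicator (AA M f k c i) x)"

lemma AA_disj: "i < k \<Longrightarrow> j < k \<Longrightarrow> i \<noteq> j \<Longrightarrow> AA M f k c i \<inter> AA M f k c j = {}"
proof (rule ccontr)
  assume a: "i < k" "j < k" "i \<noteq> j" "AA M f k c i \<inter> AA M f k c j \<noteq> {}"
  then obtain x where x: "x \<in> AA M f k c i" "x \<in> AA M f k c j" by blast
  show False
  proof (cases "i < j")
    case True
    then show False using x a unfolding AA_def by force
  next
    case False
    then have "j < i" using a by simp
    then show False using x a unfolding AA_def by force
  qed
qed

lemma AA_cover:
  assumes "1 \<le> k" "x \<in> space M"
  shows "\<exists>i<k. x \<in> AA M f k c i \<and> \<bar>f x - c i\<bar> = dd f k c x"
proof -
  let ?S = "(\<lambda>i. \<bar>f x - c i\<bar>) ` {..<k}"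
  have ne: "{..<k} \<noteq> {}" using assms by (auto simp: lessThan_empty_iff)
  have "dd f k c x \<in> ?S" unfolding dd_def using ne by (intro Min_in) auto
  then have ex: "\<exists>i. i < k \<and> \<bar>f x - c i\<bar> = dd f k c x" by auto
  define i where "i = (LEAST i. i < k \<and> \<bar>f x - c i\<bar> = dd f k c x)"
  have i: "i < k \<and> \<bar>f x - c i\<bar> = dd f k c x" unfolding i_def using ex by (rule LeastI_ex)
  have le: "\<And>j. j < k \<Longrightarrow> dd f k c x \<le> \<bar>f x - c j\<bar>" unfolding dd_def by (intro Min_le) auto
  have lt: "\<bar>f x - c i\<bar> < \<bar>f x - c j\<bar>" if "j < i" for j
  proof -
    have "\<not> (j < k \<and> \<bar>f x - c j\<bar> = dd f k c x)" using not_less_Least[OF that[unfolded i_def]] .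
    then show ?thesis using i le[of j] that by auto
  qed
  have "x \<in> AA M f k c i" unfolding AA_def using assms i le lt by auto
  then show ?thesis using i by blast
qed

lemma gg_val:
  assumes "1 \<le> k" "x \<in> space M"
  shows "\<bar>f x - gg M f k c x\<bar> = dd f k c x"
proof -
  obtain i where i: "i < k" "x \<in> AA M f k c i" "\<bar>f x - c i\<bar> = dd f k c x" using AA_cover[OF assms] by blast
  have "gg M f k c x = (\<Sum>j\<in>{i}. c j * indicator (AA M f k c j) x)"
    unfolding gg_def
    by (rule sum.mono_neutral_right) (use i AA_disj[of i k _ M f c] in \<open>auto simp: indicator_def\<close>)
  then have "gg M f k c x = c i" using i by simp
  then show ?thesis using i by simp
qed

lemma AA_sets: assumes f: "f \<in> borel_measurable M" shows "AA M f k c i \<in> sets M"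
proof -
  have fm: "(\<lambda>x. \<bar>f x - c j\<bar>) \<in> borel_measurable M" for j using f by measurable
  have "AA M f k c i = {x \<in> space M. \<forall>j\<in>{..<k}. \<bar>f x - c i\<bar> \<le> \<bar>f x - c j\<bar>} \<inter> {x \<in> space M. \<forall>j\<in>{..<i}. \<bar>f x - c i\<bar> < \<bar>f x - c j\<bar>}"
    unfolding AA_def by auto
  also have "\<dots> \<in> sets M"
    by (intro sets.Int sets.sets_Collect_finite_All borel_measurable_le borel_measurable_less fm finite_lessThan)
  finally show ?thesis .
qed

lemma gg_meas: "f \<in> borel_measurable M \<Longrightarrow> gg M f k c \<in> borel_measurable M"
  unfolding gg_def apply (rule borel_measurable_sum) apply (rule borel_measurable_times) apply simp apply (rule borel_measurable_indicator) apply (erule AA_sets) done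

lemma dd_meas: assumes "f \<in> borel_measurable M" "1 \<le> k" shows "dd f k c \<in> borel_measurable M"
proof -
  have "(\<lambda>x. \<bar>f x - gg M f k c x\<bar>) \<in> borel_measurable M" using gg_meas[OF assms(1)] assms(1) by measurable
  then show ?thesis by (rule measurable_cong[THEN iffD1, rotated]) (use gg_val[OF assms(2), of _ M f c] in simp)
qed

lemma dd_nonneg: "1 \<le> k \<Longrightarrow> 0 \<le> dd f k c x"
  unfolding dd_def by (subst Min_ge_iff) (auto simp: lessThan_empty_iff)



lemma ereal_le_real: "ereal a \<le> e \<Longrightarrow> e < \<infinity> \<Longrightarrow> a \<le> real_of_ereal e"
  by (cases e) auto

lemma enn2real_ge1: "1 \<le> p \<Longrightarrow> p \<noteq> \<infinity> \<Longrightarrow> 1 \<le> enn2real p"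
  using enn2real_mono[of 1 p] by (simp add: top.not_eq_extremum)

lemma powr_sum_bound:
  fixes a b w r :: real
  assumes "\<bar>w\<bar> \<le> \<bar>a\<bar> + \<bar>b\<bar>" "0 < r"
  shows "\<bar>w\<bar> powr r \<le> 2 powr r * (\<bar>a\<bar> powr r + \<bar>b\<bar> powr r)"
proof -
  have "\<bar>w\<bar> \<le> 2 * max \<bar>a\<bar> \<bar>b\<bar>" using assms by linarith
  then have "\<bar>w\<bar> powr r \<le> (2 * max \<bar>a\<bar> \<bar>b\<bar>) powr r" using assms by (intro powr_mono2) auto
  also have "\<dots> = 2 powr r * max \<bar>a\<bar> \<bar>b\<bar> powr r" by (simp add: powr_mult)
  also have "max \<bar>a\<bar> \<bar>b\<bar> powr r \<le> \<bar>a\<bar> powr r + \<bar>b\<bar> powr r" by (simp add: max_def)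
  then have "2 powr r * max \<bar>a\<bar> \<bar>b\<bar> powr r \<le> 2 powr r * (\<bar>a\<bar> powr r + \<bar>b\<bar> powr r)"
    by (intro mult_left_mono) auto
  finally show ?thesis .
qed

lemma esssup_bound_real:
  assumes "esssup M (\<lambda>x. ereal \<bar>u x\<bar>) < \<infinity>"
  shows "AE x in M. \<bar>u x\<bar> \<le> real_of_ereal (esssup M (\<lambda>x. ereal \<bar>u x\<bar>))"
  using esssup_AE[where M=M and f="\<lambda>x. ereal \<bar>u x\<bar>"] by eventually_elim (use assms ereal_le_real in auto)

lemma memLp_bound:
  assumes p: "1 \<le> p" and u: "memLp M p u" and v: "memLp M p v" and w: "w \<in> borel_measurable M"
    and b: "\<And>x. x \<in> space M \<Longrightarrow> \<bar>w x\<bar> \<le> \<bar>u x\<bar> + \<bar>v x\<bar>"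
  shows "memLp M p w"
proof (cases "p = \<infinity>")
  case True
  let ?a = "real_of_ereal (esssup M (\<lambda>x. ereal \<bar>u x\<bar>))"
  let ?b = "real_of_ereal (esssup M (\<lambda>x. ereal \<bar>v x\<bar>))"
  have "AE x in M. \<bar>u x\<bar> \<le> ?a" using u True by (intro esssup_bound_real) (auto simp: memLp_def)
  moreover have "AE x in M. \<bar>v x\<bar> \<le> ?b" using v True by (intro esssup_bound_real) (auto simp: memLp_def)
  moreover have "AE x in M. x \<in> space M" by simp
  ultimately have "AE x in M. ereal \<bar>w x\<bar> \<le> ereal (?a + ?b)"
  proof eventually_elim
    case (elim x)
    then show ?case using b[of x] by simp
  qed
  then have "esssup M (\<lambda>x. ereal \<bar>w x\<bar>) \<le> ereal (?a + ?b)"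
    using w by (intro esssup_I) auto
  then have "esssup M (\<lambda>x. ereal \<bar>w x\<bar>) < \<infinity>" using le_less_trans by fastforce
  then show ?thesis using True w by (simp add: memLp_def)
next
  case False
  define r where "r = enn2real p"
  have r: "1 \<le> r" using p False unfolding r_def by (rule enn2real_ge1)
  have iu: "integrable M (\<lambda>x. \<bar>u x\<bar> powr r)" and iv: "integrable M (\<lambda>x. \<bar>v x\<bar> powr r)"
    using u v False by (auto simp: memLp_def r_def)
  have "integrable M (\<lambda>x. 2 powr r * (\<bar>u x\<bar> powr r + \<bar>v x\<bar> powr r))"
    using iu iv by (intro integrable_mult_right Bochner_Integration.integrable_add)
  then have "integrable M (\<lambda>x. \<bar>w x\<bar> powr r)"
  proof (rule Bochner_Integration.integrable_bound)
    show "(\<lambda>x. \<bar>w x\<bar> powr r) \<in> borel_measurable M" using w by measurable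
    show "AE x in M. norm (\<bar>w x\<bar> powr r) \<le> norm (2 powr r * (\<bar>u x\<bar> powr r + \<bar>v x\<bar> powr r))"
      using b r by (intro AE_I2) (auto intro!: powr_sum_bound)
  qed
  then show ?thesis using False w by (simp add: memLp_def r_def)
qed

lemma memLp_zero: "memLp M p (\<lambda>x. 0)"
proof (cases "p = \<infinity>")
  case True
  have "esssup M (\<lambda>x. ereal \<bar>0::real\<bar>) \<le> 0" by (intro esssup_I) auto
  then show ?thesis using True by (auto simp: memLp_def le_less_trans)
qed (auto simp: memLp_def)

lemma memLp_mono:
  assumes p: "1 \<le> p" and v: "memLp M p v" and w: "w \<in> borel_measurable M"
    and b: "\<And>x. x \<in> space M \<Longrightarrow> \<bar>w x\<bar> \<le> \<bar>v x\<bar>"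
  shows "memLp M p w"
  using memLp_bound[OF p v memLp_zero w] b by simp

lemma Lp_norm_mono:
  assumes M0: "emeasure M (space M) \<noteq> 0" and p: "1 \<le> p" and v: "memLp M p v" and w: "w \<in> borel_measurable M"
    and b: "\<And>x. x \<in> space M \<Longrightarrow> \<bar>w x\<bar> \<le> \<bar>v x\<bar>"
  shows "Lp_norm M p w \<le> Lp_norm M p v"
proof (cases "p = \<infinity>")
  case True
  have wm: "memLp M p w" by (rule memLp_mono[OF p v w b])
  have "esssup M (\<lambda>x. ereal \<bar>w x\<bar>) \<le> esssup M (\<lambda>x. ereal \<bar>v x\<bar>)"
    using w b by (intro esssup_AE_mono) (auto intro!: AE_I2)
  moreover have "0 \<le> esssup M (\<lambda>x. ereal \<bar>w x\<bar>)"
  proof -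
    have "esssup M (\<lambda>x. 0::ereal) \<le> esssup M (\<lambda>x. ereal \<bar>w x\<bar>)" by (intro esssup_mono) auto
    then show ?thesis using esssup_const[OF M0, of "0::ereal"] by simp
  qed
  moreover have "esssup M (\<lambda>x. ereal \<bar>v x\<bar>) < \<infinity>" using v True by (simp add: memLp_def)
  ultimately show ?thesis using True unfolding Lp_norm_def
    by (cases "esssup M (\<lambda>x. ereal \<bar>w x\<bar>)"; cases "esssup M (\<lambda>x. ereal \<bar>v x\<bar>)") auto
next
  case False
  define r where "r = enn2real p"
  have r: "1 \<le> r" using p False unfolding r_def by (rule enn2real_ge1)
  have wm: "memLp M p w" by (rule memLp_mono[OF p v w b])
  have iv: "integrable M (\<lambda>x. \<bar>v x\<bar> powr r)" and iw: "integrable M (\<lambda>x. \<bar>w x\<bar> powr r)"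
    using v wm False by (auto simp: memLp_def r_def)
  have "(\<integral>x. \<bar>w x\<bar> powr r \<partial>M) \<le> (\<integral>x. \<bar>v x\<bar> powr r \<partial>M)"
    using iv iw b r by (intro integral_mono) (auto intro!: powr_mono2)
  then have "(\<integral>x. \<bar>w x\<bar> powr r \<partial>M) powr (1/r) \<le> (\<integral>x. \<bar>v x\<bar> powr r \<partial>M) powr (1/r)"
    using r by (intro powr_mono2) auto
  then show ?thesis using False unfolding Lp_norm_def r_def by simp
qed

lemma Lp_norm_cong:
  assumes "u \<in> borel_measurable M" "v \<in> borel_measurable M" "\<And>x. x \<in> space M \<Longrightarrow> \<bar>u x\<bar> = \<bar>v x\<bar>"
  shows "Lp_norm M p u = Lp_norm M p v"
proof -
  have "esssup M (\<lambda>x. ereal \<bar>u x\<bar>) = esssup M (\<lambda>x. ereal \<bar>v x\<bar>)"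
    using assms by (intro esssup_AE_cong) (auto intro!: AE_I2)
  moreover have "(\<integral>x. \<bar>u x\<bar> powr enn2real p \<partial>M) = (\<integral>x. \<bar>v x\<bar> powr enn2real p \<partial>M)"
    using assms by (intro Bochner_Integration.integral_cong) auto
  ultimately show ?thesis unfolding Lp_norm_def by simp
qed



lemma ereal_subseq:
  fixes X :: "nat \<Rightarrow> nat \<Rightarrow> ereal"
  shows "\<exists>r L. strict_mono r \<and> (\<forall>i<k. (\<lambda>n. X (r n) i) \<longlonglongrightarrow> L i)"
proof (induction k)
  case 0
  show ?case by (rule exI[of _ id]) (auto simp: strict_mono_def)
next
  case (Suc k)
  then obtain r L where r: "strict_mono r" and L: "\<forall>i<k. (\<lambda>n. X (r n) i) \<longlonglongrightarrow> L i" by blast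
  obtain t where t: "strict_mono t" and mt: "monoseq (\<lambda>n. X (r (t n)) k)"
    using seq_monosub[of "\<lambda>n. X (r n) k"] by blast
  obtain l where l: "(\<lambda>n. X (r (t n)) k) \<longlonglongrightarrow> l"
    using mt unfolding monoseq_iff by (metis LIMSEQ_SUP LIMSEQ_INF)
  have "\<forall>i<Suc k. (\<lambda>n. X ((r \<circ> t) n) i) \<longlonglongrightarrow> (L(k := l)) i"
  proof (intro allI impI)
    fix i assume "i < Suc k"
    show "(\<lambda>n. X ((r \<circ> t) n) i) \<longlonglongrightarrow> (L(k := l)) i"
    proof (cases "i = k")
      case True then show ?thesis using l by simp
    next
      case False
      then have "i < k" using \<open>i < Suc k\<close> by simp
      then have "((\<lambda>n. X (r n) i) \<circ> t) \<longlonglongrightarrow> L i" using L t by (intro LIMSEQ_subseq_LIMSEQ) auto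
      then show ?thesis using False by (simp add: comp_def)
    qed
  qed
  moreover have "strict_mono (r \<circ> t)" using r t by (rule strict_mono_o)
  ultimately show ?case by blast
qed

lemma tendsto_Min_fin:
  fixes X :: "nat \<Rightarrow> 'i \<Rightarrow> 'b::linorder_topology"
  assumes "finite S" "S \<noteq> {}" "\<And>i. i \<in> S \<Longrightarrow> (\<lambda>n. X n i) \<longlonglongrightarrow> l i"
  shows "(\<lambda>n. Min ((\<lambda>i. X n i) ` S)) \<longlonglongrightarrow> Min (l ` S)"
  using assms
proof (induction S rule: finite_ne_induct)
  case (singleton x)
  then show ?case by simp
next
  case (insert x F)
  then show ?case by (simp add: tendsto_min)
qed

lemma ereal_Min_commute:
  assumes "finite A" "A \<noteq> {}"
  shows "ereal (Min A) = Min (ereal ` A)"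
  by (rule mono_Min_commute[OF _ assms]) (auto simp: mono_def)

lemma pw_single:
  fixes c :: "nat \<Rightarrow> real" and L :: ereal and y :: real
  assumes "(\<lambda>n. ereal (c n)) \<longlonglongrightarrow> L"
  shows "(\<lambda>n. ereal \<bar>y - c n\<bar>) \<longlonglongrightarrow> (if \<bar>L\<bar> = \<infinity> then \<infinity> else ereal \<bar>y - real_of_ereal L\<bar>)"
proof (cases L)
  case (real a)
  then have "c \<longlonglongrightarrow> a" using assms by simp
  then have "(\<lambda>n. \<bar>y - c n\<bar>) \<longlonglongrightarrow> \<bar>y - a\<bar>" by (intro tendsto_intros)
  then show ?thesis using real by simp
next
  case PInf
  have "\<forall>\<^sub>F n in sequentially. ereal r < ereal \<bar>y - c n\<bar>" for r
  proof -
    have "\<forall>\<^sub>F n in sequentially. ereal (r + \<bar>y\<bar>) < ereal (c n)" using assms PInf by (simp add: tendsto_PInfty)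
    then show ?thesis by eventually_elim auto
  qed
  then show ?thesis using PInf by (simp add: tendsto_PInfty)
next
  case MInf
  have "\<forall>\<^sub>F n in sequentially. ereal r < ereal \<bar>y - c n\<bar>" for r
  proof -
    have "\<forall>\<^sub>F n in sequentially. ereal (c n) < ereal (- r - \<bar>y\<bar>)" using assms MInf by (simp add: tendsto_MInfty)
    then show ?thesis by eventually_elim auto
  qed
  then show ?thesis using MInf by (simp add: tendsto_PInfty)
qed

definition ell :: "(nat \<Rightarrow> ereal) \<Rightarrow> real \<Rightarrow> nat \<Rightarrow> ereal" where
  "ell L y i = (if \<bar>L i\<bar> = \<infinity> then \<infinity> else ereal \<bar>y - real_of_ereal (L i)\<bar>)"

lemma pw_conv:
  fixes c :: "nat \<Rightarrow> nat \<Rightarrow> real" and L :: "nat \<Rightarrow> ereal" and y :: real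
  assumes "\<forall>i<k. (\<lambda>n. ereal (c n i)) \<longlonglongrightarrow> L i" "1 \<le> k"
  shows "(\<lambda>n. ereal (Min ((\<lambda>i. \<bar>y - c n i\<bar>) ` {..<k}))) \<longlonglongrightarrow> Min (ell L y ` {..<k})"
proof -
  have ne: "{..<k} \<noteq> {}" using assms by (auto simp: lessThan_empty_iff)
  have "ereal (Min ((\<lambda>i. \<bar>y - c n i\<bar>) ` {..<k})) = Min ((\<lambda>i. ereal \<bar>y - c n i\<bar>) ` {..<k})" for n
    using ne by (subst ereal_Min_commute) (auto simp: image_image)
  moreover have "(\<lambda>n. Min ((\<lambda>i. ereal \<bar>y - c n i\<bar>) ` {..<k})) \<longlonglongrightarrow> Min (ell L y ` {..<k})"
    using ne assms unfolding ell_def by (intro tendsto_Min_fin pw_single) auto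
  ultimately show ?thesis by simp
qed

lemma ell_inf:
  assumes "\<forall>i<k. \<bar>L i\<bar> = \<infinity>" "1 \<le> k"
  shows "Min (ell L y ` {..<k}) = \<infinity>"
proof -
  have "ell L y ` {..<k} = {\<infinity>}" using assms by (auto simp: ell_def image_iff) (metis One_nat_def Suc_le_lessD)
  then show ?thesis by simp
qed

lemma ell_fin:
  assumes i0: "i0 < k" "\<bar>L i0\<bar> \<noteq> \<infinity>"
    and cs: "\<And>i. cs i = (if \<bar>L i\<bar> = \<infinity> then real_of_ereal (L i0) else real_of_ereal (L i))"
  shows "Min (ell L y ` {..<k}) = ereal (Min ((\<lambda>i. \<bar>y - cs i\<bar>) ` {..<k}))"
proof -
  have ne: "{..<k} \<noteq> {}" using i0 by auto
  have e: "ereal (Min ((\<lambda>i. \<bar>y - cs i\<bar>) ` {..<k})) = Min ((\<lambda>i. ereal \<bar>y - cs i\<bar>) ` {..<k})"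
    using ne by (subst ereal_Min_commute) (auto simp: image_image)
  have "Min (ell L y ` {..<k}) \<le> ereal \<bar>y - cs i\<bar>" if "i < k" for i
  proof (cases "\<bar>L i\<bar> = \<infinity>")
    case True
    have "Min (ell L y ` {..<k}) \<le> ell L y i0" using i0 by (intro Min_le) auto
    then show ?thesis using True i0 cs[of i] by (simp add: ell_def)
  next
    case False
    have "Min (ell L y ` {..<k}) \<le> ell L y i" using that by (intro Min_le) auto
    then show ?thesis using False cs[of i] by (simp add: ell_def)
  qed
  then have 1: "Min (ell L y ` {..<k}) \<le> Min ((\<lambda>i. ereal \<bar>y - cs i\<bar>) ` {..<k})"
    using ne by (subst Min_ge_iff) auto
  have "Min ((\<lambda>i. ereal \<bar>y - cs i\<bar>) ` {..<k}) \<le> ell L y i" if "i < k" for i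
  proof -
    have "Min ((\<lambda>i. ereal \<bar>y - cs i\<bar>) ` {..<k}) \<le> ereal \<bar>y - cs i\<bar>" using that by (intro Min_le) auto
    also have "\<dots> \<le> ell L y i" using cs[of i] by (simp add: ell_def)
    finally show ?thesis .
  qed
  then have 2: "Min ((\<lambda>i. ereal \<bar>y - cs i\<bar>) ` {..<k}) \<le> Min (ell L y ` {..<k})"
    using ne by (subst Min_ge_iff) auto
  show ?thesis using 1 2 e by simp
qed



lemma sum_partition_val:
  fixes a :: "nat \<Rightarrow> real"
  assumes j: "j < l" "x \<in> A j" and dis: "\<forall>i<l. \<forall>i'<l. i \<noteq> i' \<longrightarrow> A i \<inter> A i' = {}"
  shows "(\<Sum>i<l. a i * indicator (A i) x) = a j"
proof -
  have nx: "x \<notin> A i" if "i < l" "i \<noteq> j" for i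
    using dis j that by blast
  have "(\<Sum>i<l. a i * indicator (A i) x) = (\<Sum>i\<in>{j}. a i * indicator (A i) x)"
    by (rule sum.mono_neutral_right) (use j nx in \<open>auto simp: indicator_def\<close>)
  then show ?thesis using j by simp
qed

context
  fixes M :: "'a measure" and p :: ennreal and k :: nat and f :: "'a \<Rightarrow> real"
  assumes M0: "emeasure M (space M) \<noteq> 0" and p1: "1 \<le> p" and k1: "1 \<le> k" and fL: "memLp M p f"
begin

definition Phi :: "(nat \<Rightarrow> real) \<Rightarrow> real" where
  "Phi c = (if p = \<infinity> then Lp_norm M p (dd f k c) else (\<integral>x. \<bar>dd f k c x\<bar> powr enn2real p \<partial>M))"

definition CC :: "(nat \<Rightarrow> real) set" where
  "CC = {c. memLp M p (dd f k c)}"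

lemma fm: "f \<in> borel_measurable M" using fL by (simp add: memLp_def)

lemma ddm[measurable]: "dd f k c \<in> borel_measurable M" using dd_meas[OF fm k1] .

lemma esssup_nonneg: "0 \<le> esssup M (\<lambda>x. ereal \<bar>u x\<bar>)"
proof -
  have "esssup M (\<lambda>x. 0::ereal) \<le> esssup M (\<lambda>x. ereal \<bar>u x\<bar>)" by (intro esssup_mono) auto
  then show ?thesis using esssup_const[OF M0, of "0::ereal"] by simp
qed

lemma Phi_nonneg: "0 \<le> Phi c"
  unfolding Phi_def Lp_norm_def using esssup_nonneg[of "dd f k c"]
  by (auto simp: real_of_ereal_pos)

lemma Phi_mono_norm:
  assumes "c \<in> CC" "c' \<in> CC" "Phi c \<le> Phi c'"
  shows "Lp_norm M p (dd f k c) \<le> Lp_norm M p (dd f k c')"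
proof (cases "p = \<infinity>")
  case True then show ?thesis using assms(3) unfolding Phi_def by simp
next
  case False
  have r: "1 \<le> enn2real p" using p1 False by (rule enn2real_ge1)
  have "Phi c powr (1 / enn2real p) \<le> Phi c' powr (1 / enn2real p)"
    using assms r Phi_nonneg[of c] by (intro powr_mono2) auto
  then show ?thesis using False by (simp add: Phi_def Lp_norm_def)
qed

lemma Phi_inf: "p = \<infinity> \<Longrightarrow> Phi c = real_of_ereal (esssup M (\<lambda>x. ereal \<bar>dd f k c x\<bar>))"
  unfolding Phi_def Lp_norm_def by simp

lemma Phi_fin: "p \<noteq> \<infinity> \<Longrightarrow> Phi c = (\<integral>x. \<bar>dd f k c x\<bar> powr enn2real p \<partial>M)"
  unfolding Phi_def by simp

lemma CC_inf: "p = \<infinity> \<Longrightarrow> c \<in> CC \<longleftrightarrow> esssup M (\<lambda>x. ereal \<bar>dd f k c x\<bar>) < \<infinity>"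
  unfolding CC_def memLp_def using ddm by simp

lemma CC_fin: "p \<noteq> \<infinity> \<Longrightarrow> c \<in> CC \<longleftrightarrow> integrable M (\<lambda>x. \<bar>dd f k c x\<bar> powr enn2real p)"
  unfolding CC_def memLp_def using ddm by simp

lemma AE_False_imp: "(AE x in M. False) \<Longrightarrow> False"
  using M0 ae_filter_eq_bot_iff[of M] by (simp add: eventually_False)

lemma lsc:
  assumes C: "\<And>n. c n \<in> CC" and lim: "(\<lambda>n. Phi (c n)) \<longlonglongrightarrow> m"
  shows "\<exists>c'\<in>CC. Phi c' \<le> m"
proof -
  obtain r L where r: "strict_mono r" and L: "\<forall>i<k. (\<lambda>n. ereal (c (r n) i)) \<longlonglongrightarrow> L i"
    using ereal_subseq[where X="\<lambda>n i. ereal (c n i)" and k=k] by blast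
  define c2 where "c2 n = c (r n)" for n
  have C2: "c2 n \<in> CC" for n using C unfolding c2_def by simp
  have lim2: "(\<lambda>n. Phi (c2 n)) \<longlonglongrightarrow> m"
    using LIMSEQ_subseq_LIMSEQ[OF lim r] unfolding c2_def comp_def by simp
  have m0: "0 \<le> m" using lim2 Phi_nonneg by (intro LIMSEQ_le_const) auto
  have pw: "(\<lambda>n. ereal (dd f k (c2 n) x)) \<longlonglongrightarrow> Min (ell L (f x) ` {..<k})" for x
    unfolding dd_def c2_def using pw_conv[OF L k1] .
  have dd0: "0 \<le> dd f k c x" for c x using dd_nonneg[OF k1] .
  show ?thesis
  proof (cases "\<forall>i<k. \<bar>L i\<bar> = \<infinity>")
    case True
    have top: "LIM n sequentially. dd f k (c2 n) x :> at_top" for x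
    proof -
      have "(\<lambda>n. ereal (dd f k (c2 n) x)) \<longlonglongrightarrow> \<infinity>" using pw[of x] ell_inf[OF True k1] by simp
      then have "\<forall>\<^sub>F n in sequentially. ereal Z < ereal (dd f k (c2 n) x)" for Z by (simp add: tendsto_PInfty)
      then have ev: "\<forall>\<^sub>F n in sequentially. Z < dd f k (c2 n) x" for Z by simp
      have "\<forall>\<^sub>F n in sequentially. Z \<le> dd f k (c2 n) x" for Z
        using ev[of Z] by (rule eventually_mono) simp
      then show ?thesis unfolding filterlim_at_top by blast
    qed
    show ?thesis
    proof (cases "p = \<infinity>")
      case pinf: True
      have "AE x in M. dd f k (c2 n) x \<le> Phi (c2 n)" for n
      proof -
        have "esssup M (\<lambda>x. ereal \<bar>dd f k (c2 n) x\<bar>) < \<infinity>" using C2[of n] CC_inf[OF pinf] by simp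
        from esssup_bound_real[OF this] show ?thesis
          by eventually_elim (simp add: Phi_inf[OF pinf] dd0)
      qed
      then have "AE x in M. \<forall>n. dd f k (c2 n) x \<le> Phi (c2 n)" by (simp add: AE_all_countable)
      then have "AE x in M. False"
      proof eventually_elim
        case (elim x)
        note bx = elim
        have "\<forall>\<^sub>F n in sequentially. Phi (c2 n) < m + 1" using lim2 by (simp add: order_tendsto_iff)
        moreover have "\<forall>\<^sub>F n in sequentially. m + 1 \<le> dd f k (c2 n) x" using top[of x] by (simp add: filterlim_at_top)
        ultimately have "\<forall>\<^sub>F n in sequentially. Phi (c2 n) < m + 1 \<and> m + 1 \<le> dd f k (c2 n) x"
          by (rule eventually_conj)
        then have "\<forall>\<^sub>F n in sequentially. False"
        proof (rule eventually_mono)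
          fix n assume "Phi (c2 n) < m + 1 \<and> m + 1 \<le> dd f k (c2 n) x"
          then show False using bx[rule_format, of n] by linarith
        qed
        then show False by simp
      qed
      then show ?thesis using AE_False_imp by blast
    next
      case pfin: False
      define q where "q = enn2real p"
      have q: "1 \<le> q" using p1 pfin unfolding q_def by (rule enn2real_ge1)
      define u where "u n x = ennreal (\<bar>dd f k (c2 n) x\<bar> powr q)" for n x
      have um: "u n \<in> borel_measurable M" for n unfolding u_def by measurable
      have ulim: "(\<lambda>n. u n x) \<longlonglongrightarrow> top" for x
      proof -
        have "LIM n sequentially. \<bar>dd f k (c2 n) x\<bar> powr q :> at_top"
        proof (rule filterlim_at_top_mono[OF top[of x]])
          have "\<forall>\<^sub>F n in sequentially. 1 \<le> dd f k (c2 n) x" using top[of x] by (simp add: filterlim_at_top)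
          then show "\<forall>\<^sub>F n in sequentially. dd f k (c2 n) x \<le> \<bar>dd f k (c2 n) x\<bar> powr q"
          proof eventually_elim
            case (elim n)
            then have "dd f k (c2 n) x powr 1 \<le> dd f k (c2 n) x powr q" using q by (intro powr_mono) auto
            then show ?case using elim by simp
          qed
        qed
        then show ?thesis unfolding u_def by (simp add: ennreal_tendsto_top_eq_at_top)
      qed
      have int: "integral\<^sup>N M (u n) = ennreal (Phi (c2 n))" for n
      proof -
        have "integrable M (\<lambda>x. \<bar>dd f k (c2 n) x\<bar> powr q)" using C2[of n] CC_fin[OF pfin] by (simp add: q_def)
        then show ?thesis unfolding u_def Phi_fin[OF pfin] q_def
          by (subst nn_integral_eq_integral) auto
      qed
      have "(\<integral>\<^sup>+ x. liminf (\<lambda>n. u n x) \<partial>M) \<le> liminf (\<lambda>n. integral\<^sup>N M (u n))"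
        by (rule nn_integral_liminf[OF um])
      also have "liminf (\<lambda>n. integral\<^sup>N M (u n)) = ennreal m"
        unfolding int by (intro lim_imp_Liminf) (auto intro: lim2)
      also have "(\<lambda>x. liminf (\<lambda>n. u n x)) = (\<lambda>x. top)"
        by (intro ext lim_imp_Liminf ulim) auto
      finally have "top * emeasure M (space M) \<le> ennreal m" by simp
      then show ?thesis using M0 by (simp add: ennreal_top_mult top_unique)
    qed
  next
    case False
    then obtain i0 where i0: "i0 < k" "\<bar>L i0\<bar> \<noteq> \<infinity>" by blast
    define cs where "cs i = (if \<bar>L i\<bar> = \<infinity> then real_of_ereal (L i0) else real_of_ereal (L i))" for i
    have pw2: "(\<lambda>n. dd f k (c2 n) x) \<longlonglongrightarrow> dd f k cs x" for x
    proof -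
      have "Min (ell L (f x) ` {..<k}) = ereal (dd f k cs x)"
        unfolding dd_def by (rule ell_fin[where L=L and k=k, OF i0]) (simp add: cs_def)
      then show ?thesis using pw[of x] by simp
    qed
    show ?thesis
    proof (cases "p = \<infinity>")
      case pinf: True
      have "AE x in M. dd f k (c2 n) x \<le> Phi (c2 n)" for n
      proof -
        have "esssup M (\<lambda>x. ereal \<bar>dd f k (c2 n) x\<bar>) < \<infinity>" using C2[of n] CC_inf[OF pinf] by simp
        from esssup_bound_real[OF this] show ?thesis
          by eventually_elim (simp add: Phi_inf[OF pinf] dd0)
      qed
      then have "AE x in M. \<forall>n. dd f k (c2 n) x \<le> Phi (c2 n)" by (simp add: AE_all_countable)
      then have "AE x in M. ereal \<bar>dd f k cs x\<bar> \<le> ereal m"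
      proof eventually_elim
        case (elim x)
        note bx = elim
        have "dd f k cs x \<le> m"
          by (rule tendsto_le[OF trivial_limit_sequentially lim2 pw2[of x]]) (use bx in simp)
        then show ?case using dd0 by simp
      qed
      then have es: "esssup M (\<lambda>x. ereal \<bar>dd f k cs x\<bar>) \<le> ereal m" using ddm by (intro esssup_I) auto
      then have "esssup M (\<lambda>x. ereal \<bar>dd f k cs x\<bar>) < \<infinity>" using le_less_trans by fastforce
      then have "cs \<in> CC" using CC_inf[OF pinf] by simp
      moreover have "Phi cs \<le> m"
        using es esssup_nonneg[of "dd f k cs"] unfolding Phi_inf[OF pinf]
        by (cases "esssup M (\<lambda>x. ereal \<bar>dd f k cs x\<bar>)") auto
      ultimately show ?thesis by blast
    next
      case pfin: False
      define q where "q = enn2real p"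
      have q: "1 \<le> q" using p1 pfin unfolding q_def by (rule enn2real_ge1)
      define u where "u n x = ennreal (\<bar>dd f k (c2 n) x\<bar> powr q)" for n x
      have um: "u n \<in> borel_measurable M" for n unfolding u_def by measurable
      have ulim: "(\<lambda>n. u n x) \<longlonglongrightarrow> ennreal (\<bar>dd f k cs x\<bar> powr q)" for x
        unfolding u_def using pw2[of x] q by (intro tendsto_ennrealI tendsto_powr tendsto_intros) auto
      have int: "integral\<^sup>N M (u n) = ennreal (Phi (c2 n))" for n
      proof -
        have "integrable M (\<lambda>x. \<bar>dd f k (c2 n) x\<bar> powr q)" using C2[of n] CC_fin[OF pfin] by (simp add: q_def)
        then show ?thesis unfolding u_def Phi_fin[OF pfin] q_def
          by (subst nn_integral_eq_integral) auto
      qed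
      have "(\<integral>\<^sup>+ x. liminf (\<lambda>n. u n x) \<partial>M) \<le> liminf (\<lambda>n. integral\<^sup>N M (u n))"
        by (rule nn_integral_liminf[OF um])
      also have "liminf (\<lambda>n. integral\<^sup>N M (u n)) = ennreal m"
        unfolding int by (intro lim_imp_Liminf) (auto intro: lim2)
      also have "(\<lambda>x. liminf (\<lambda>n. u n x)) = (\<lambda>x. ennreal (\<bar>dd f k cs x\<bar> powr q))"
        by (intro ext lim_imp_Liminf ulim) auto
      finally have nn: "(\<integral>\<^sup>+ x. ennreal (\<bar>dd f k cs x\<bar> powr q) \<partial>M) \<le> ennreal m" .
      have intg: "integrable M (\<lambda>x. \<bar>dd f k cs x\<bar> powr q)"
      proof (rule integrableI_bounded)
        show "(\<lambda>x. \<bar>dd f k cs x\<bar> powr q) \<in> borel_measurable M" by measurable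
        show "(\<integral>\<^sup>+ x. ennreal (norm (\<bar>dd f k cs x\<bar> powr q)) \<partial>M) < \<infinity>"
          using nn by (simp add: le_less_trans)
      qed
      then have "cs \<in> CC" using CC_fin[OF pfin] by (simp add: q_def)
      moreover have "Phi cs \<le> m"
      proof -
        have "(\<integral>\<^sup>+ x. ennreal (\<bar>dd f k cs x\<bar> powr q) \<partial>M) = ennreal (\<integral>x. \<bar>dd f k cs x\<bar> powr q \<partial>M)"
          using intg by (intro nn_integral_eq_integral) auto
        then show ?thesis using nn m0 by (simp add: Phi_fin[OF pfin] q_def)
      qed
      ultimately show ?thesis by blast
    qed
  qed
qed

lemma CC_nonempty: "(\<lambda>_. 0) \<in> CC"
proof -
  have "\<bar>dd f k (\<lambda>_. 0) x\<bar> \<le> \<bar>f x\<bar>" for x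
  proof -
    have "\<bar>f x - 0\<bar> \<in> (\<lambda>i. \<bar>f x - 0\<bar>) ` {..<k}" using k1 by (intro image_eqI[of _ _ 0]) auto
    then have "dd f k (\<lambda>_. 0) x \<le> \<bar>f x - 0\<bar>" unfolding dd_def by (intro Min_le) auto
    then show ?thesis using dd_nonneg[OF k1, of f "\<lambda>_. 0" x] by simp
  qed
  then have "memLp M p (dd f k (\<lambda>_. 0))" by (intro memLp_mono[OF p1 fL ddm])
  then show ?thesis by (simp add: CC_def)
qed

lemma exists_min: "\<exists>cs\<in>CC. \<forall>c\<in>CC. Phi cs \<le> Phi c"
proof -
  define m where "m = Inf (Phi ` CC)"
  have ne: "Phi ` CC \<noteq> {}" using CC_nonempty by blast
  have bdd: "bdd_below (Phi ` CC)" using Phi_nonneg by (intro bdd_belowI[of _ 0]) auto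
  have "\<exists>c\<in>CC. Phi c < m + inverse (real (Suc n))" for n
  proof -
    have "Inf (Phi ` CC) < m + inverse (real (Suc n))" unfolding m_def by simp
    then have "\<exists>y\<in>Phi ` CC. y < m + inverse (real (Suc n))" using cInf_less_iff[OF ne bdd] by blast
    then show ?thesis by blast
  qed
  then have "\<forall>n. \<exists>c\<in>CC. Phi c < m + inverse (real (Suc n))" by blast
  then obtain c where c: "\<And>n. c n \<in> CC" "\<And>n. Phi (c n) < m + inverse (real (Suc n))"
    unfolding Ball_def Bex_def choice_iff by blast
  have low: "m \<le> Phi (c n)" for n unfolding m_def using c(1) bdd by (intro cInf_lower) auto
  have "(\<lambda>n. Phi (c n)) \<longlonglongrightarrow> m"
  proof (rule tendsto_sandwich[OF _ _ tendsto_const LIMSEQ_inverse_real_of_nat_add[of m]])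
    show "\<forall>\<^sub>F n in sequentially. m \<le> Phi (c n)" using low by (intro always_eventually allI)
    show "\<forall>\<^sub>F n in sequentially. Phi (c n) \<le> m + inverse (real (Suc n))" using c(2) by (intro always_eventually allI less_imp_le)
  qed
  from lsc[OF c(1) this] obtain cs where cs: "cs \<in> CC" "Phi cs \<le> m" by blast
  have "Phi cs \<le> Phi c'" if "c' \<in> CC" for c'
  proof -
    have "m \<le> Phi c'" unfolding m_def using that bdd by (intro cInf_lower) auto
    then show ?thesis using cs by simp
  qed
  then show ?thesis using cs by blast
qed

lemma main: "\<exists>g\<in>G_set M p k. Lp_norm M p (\<lambda>x. f x - g x) = D_dist M p k f"
proof -
  obtain cs where cs: "cs \<in> CC" "\<And>c. c \<in> CC \<Longrightarrow> Phi cs \<le> Phi c" using exists_min by blast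
  define g where "g = gg M f k cs"
  have gm: "g \<in> borel_measurable M" unfolding g_def by (rule gg_meas[OF fm])
  have fgm: "(\<lambda>x. f x - g x) \<in> borel_measurable M" using gm fm by (rule borel_measurable_diff[rotated])
  have gval: "\<bar>f x - g x\<bar> = dd f k cs x" if "x \<in> space M" for x
    unfolding g_def using gg_val[OF k1 that] .
  have dd0: "0 \<le> dd f k c x" for c x using dd_nonneg[OF k1] .
  have csL: "memLp M p (dd f k cs)" using cs(1) by (simp add: CC_def)
  have fgn: "Lp_norm M p (\<lambda>x. f x - g x) = Lp_norm M p (dd f k cs)"
    by (rule Lp_norm_cong[OF fgm ddm]) (simp add: gval dd0)
  have gG: "g \<in> G_set M p k"
  proof -
    have gL: "memLp M p g"
    proof (rule memLp_bound[OF p1 fL csL gm])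
      fix x assume "x \<in> space M"
      then have "\<bar>f x - g x\<bar> = dd f k cs x" by (rule gval)
      then show "\<bar>g x\<bar> \<le> \<bar>f x\<bar> + \<bar>dd f k cs x\<bar>" by linarith
    qed
    have U: "(\<Union>i<k. AA M f k cs i) = space M"
    proof
      have "AA M f k cs i \<subseteq> space M" for i unfolding AA_def by (rule subsetI) (erule CollectE, erule conjunct1)
      then show "(\<Union>i<k. AA M f k cs i) \<subseteq> space M" by (rule UN_least)
      show "space M \<subseteq> (\<Union>i<k. AA M f k cs i)"
      proof
        fix x assume "x \<in> space M"
        then obtain i where "i < k" "x \<in> AA M f k cs i" using AA_cover[OF k1, of x M f cs] by blast
        then show "x \<in> (\<Union>i<k. AA M f k cs i)" by blast
      qed
    qed
    have S: "\<forall>i<k. AA M f k cs i \<in> sets M" by (intro allI impI AA_sets[OF fm])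
    have D: "\<forall>i<k. \<forall>j<k. i \<noteq> j \<longrightarrow> AA M f k cs i \<inter> AA M f k cs j = {}" by (intro allI impI AA_disj)
    have V: "\<forall>x\<in>space M. g x = (\<Sum>i<k. cs i * indicator (AA M f k cs i) x)"
      unfolding g_def gg_def by simp
    show ?thesis unfolding G_set_def mem_Collect_eq
      apply (rule conjI[OF gL])
      apply (rule exI[of _ k], rule exI[of _ "AA M f k cs"], rule exI[of _ cs])
      using S D U V by (intro conjI order_refl)
  qed
  have le: "Lp_norm M p (\<lambda>x. f x - g x) \<le> Lp_norm M p (\<lambda>x. f x - h x)" if h: "h \<in> G_set M p k" for h
  proof -
    obtain l A a where hL: "memLp M p h" and l: "l \<le> k" and A: "\<forall>i<l. A i \<in> sets M"
      and dis: "\<forall>i<l. \<forall>j<l. i \<noteq> j \<longrightarrow> A i \<inter> A j = {}" and U: "(\<Union>i<l. A i) = space M"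
      and hv: "\<forall>x\<in>space M. h x = (\<Sum>i<l. a i * indicator (A i) x)"
      using h unfolding G_set_def mem_Collect_eq by (elim conjE exE) (intro that)
    have hm: "h \<in> borel_measurable M" using hL by (simp add: memLp_def)
    have fhm: "(\<lambda>x. f x - h x) \<in> borel_measurable M" using hm fm by (rule borel_measurable_diff[rotated])
    have fhL: "memLp M p (\<lambda>x. f x - h x)" by (rule memLp_bound[OF p1 fL hL fhm]) simp
    define ch where "ch i = (if i < l then a i else a 0)" for i
    have pt: "\<bar>dd f k ch x\<bar> \<le> \<bar>f x - h x\<bar>" if x: "x \<in> space M" for x
    proof -
      obtain j where j: "j < l" "x \<in> A j" using x U by blast
      have "h x = a j" using hv x sum_partition_val[OF j dis] by simp
      moreover have "dd f k ch x \<le> \<bar>f x - ch j\<bar>" unfolding dd_def using j l by (intro Min_le) auto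
      ultimately show ?thesis using j dd0[of ch x] by (simp add: ch_def)
    qed
    have chC: "ch \<in> CC" unfolding CC_def using memLp_mono[OF p1 fhL ddm pt] by simp
    have "Lp_norm M p (dd f k cs) \<le> Lp_norm M p (dd f k ch)" by (rule Phi_mono_norm[OF cs(1) chC cs(2)[OF chC]])
    also have "\<dots> \<le> Lp_norm M p (\<lambda>x. f x - h x)" by (rule Lp_norm_mono[OF M0 p1 fhL ddm pt])
    finally show ?thesis using fgn by simp
  qed
  have "D_dist M p k f = Lp_norm M p (\<lambda>x. f x - g x)"
    unfolding D_dist_def
  proof (rule cInf_eq_minimum)
    show "Lp_norm M p (\<lambda>x. f x - g x) \<in> {Lp_norm M p (\<lambda>x. f x - h x) |h. h \<in> G_set M p k}"
      using gG by blast
    fix y assume "y \<in> {Lp_norm M p (\<lambda>x. f x - h x) |h. h \<in> G_set M p k}"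
    then obtain h where "h \<in> G_set M p k" "y = Lp_norm M p (\<lambda>x. f x - h x)" by blast
    then show "Lp_norm M p (\<lambda>x. f x - g x) \<le> y" using le by simp
  qed
  then show ?thesis using gG by auto
qed

end


theorem theorem1p1:
  fixes M :: "'a measure" and p :: ennreal and k :: nat and f :: "'a \<Rightarrow> real"
  assumes "emeasure M (space M) \<noteq> 0"
    and "1 \<le> p"
    and "1 \<le> k"
    and "memLp M p f"
  shows "\<exists>g\<in>G_set M p k. Lp_norm M p (\<lambda>x. f x - g x) = D_dist M p k f"
  using main[OF assms] .

end
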